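(* Consider the multicast coalitional game with player set $\mathcal{N}=\{1,\dots,n\}$ and value function $$v(S)=\sum_{i\in S}U_i-\sum_{i\in S}\frac{\alpha_i}{R_S}-\frac{\beta+\gamma}{R_S},\qquad R_S=\min_{i\in S}R_i,$$ for nonempty $S\subseteq\mathcal{N}$, where the rates satisfy $R_1\le R_2\le\dots\le R_n$. Let $\mathbf{P}=\{P_1,\dots,P_n\}$ with $P_i=\{i\}$. If $$\frac{R_{i+1}}{R_i}\ge\frac{\alpha_{i+1}+\beta+\gamma}{\alpha_{i+1}}\quad\forall i\in\{1,\dots,n-1\},$$ then $\mathbf{P}$ is $\mathbb{D}_c$-stable.
   Context: A transmitter multicasts a file of size $X>0$ bits to users $\mathcal{N}$. User $i$ has valuation $U_i\in\mathbb{R}$, downloads at rate $R_i>0$, and consumes receive power $P_{Rx,i}>0$; the transmitter transmits at power $P_{Tx}>0$. Costs per unit energy are $a>0$ at users and $b>0$ at the transmitter; bandwidth cost per second is $w>0$. Set $\alpha_i=aP_{Rx,i}X$, $\beta=bP_{Tx}X$, $\gamma=wX$. A collection is a set $\mathbf{S}=\{S_1,\dots,S_k\}$ of mutually disjoint nonempty subsets of $\mathcal{N}$, with value $v(\mathbf{S})=\sum_{i=1}^kv(S_i)$. For a partition $\mathbf{P}=\{P_1,\dots,P_n\}$, $\mathbf{S}[\mathbf{P}]$ is the collection of the nonempty sets among $(\bigcup_{i=1}^kS_i)\cap P_1,\dots,(\bigcup_{i=1}^kS_i)\cap P_n$. A partition $\mathbf{P}$ is $\mathbb{D}_c$-stable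 if $v(\mathbf{S}[\mathbf{P}])\ge v(\mathbf{S})$ for every collection $\mathbf{S}$. The ordering $R_1\le\dots\le R_n$ is the paper's standing assumption that the coalitions of $\mathbf{P}$ are indexed in increasing order of rates. *)

theory Defs
  imports Complex_Main
begin

text \<open>Multicast coalitional game. Players are naturals; the player set is {1..n}.\<close>

definition rate_min :: "(nat \<Rightarrow> real) \<Rightarrow> nat set \<Rightarrow> real" where
  "rate_min R S = Min (R ` S)"

definition mc_value ::
  "(nat \<Rightarrow> real) \<Rightarrow> (nat \<Rightarrow> real) \<Rightarrow> (nat \<Rightarrow> real) \<Rightarrow> real \<Rightarrow> real \<Rightarrow> nat set \<Rightarrow> real" where
  "mc_value U R alpha beta gamma S =
     (\<Sum>i\<in>S. U i) - (\<Sum>i\<in>S. alpha i / rate_min R S) - (beta + gamma) / rate_min R S"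

definition is_collection :: "nat set \<Rightarrow> nat set set \<Rightarrow> bool" where
  "is_collection N SS \<longleftrightarrow>
     (\<forall>S\<in>SS. S \<noteq> {} \<and> S \<subseteq> N) \<and>
     (\<forall>S\<in>SS. \<forall>T\<in>SS. S \<noteq> T \<longrightarrow> S \<inter> T = {})"

definition coll_value :: "(nat set \<Rightarrow> real) \<Rightarrow> nat set set \<Rightarrow> real" where
  "coll_value v SS = (\<Sum>S\<in>SS. v S)"

definition coll_restrict :: "nat set set \<Rightarrow> nat set set \<Rightarrow> nat set set" where
  "coll_restrict SS PP = {(\<Union>SS) \<inter> P | P. P \<in> PP \<and> (\<Union>SS) \<inter> P \<noteq> {}}"

definition Dc_stable :: "nat set \<Rightarrow> (nat set \<Rightarrow> real) \<Rightarrow> nat set set \<Rightarrow> bool" where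
  "Dc_stable N v PP \<longleftrightarrow>
     (\<forall>SS. is_collection N SS \<longrightarrow> coll_value v (coll_restrict SS PP) \<ge> coll_value v SS)"

end

theory Submission
  imports Defs
begin

lemma key_ineq:
  fixes R al :: "nat \<Rightarrow> real" and c :: real
  assumes S: "S \<noteq> {}" "S \<subseteq> {1..n}"
    and Rp: "\<forall>i\<in>{1..n}. R i > 0"
    and alp: "\<forall>i\<in>{1..n}. al i > 0"
    and srt: "\<forall>i\<in>{1..n}. \<forall>j\<in>{1..n}. i \<le> j \<longrightarrow> R i \<le> R j"
    and hyp: "\<forall>i\<in>{1..<n}. (al (i+1) + c) / R (i+1) \<le> al (i+1) / R i"
  shows "(\<Sum>i\<in>S. (al i + c) / R i) \<le> (sum al S + c) / Min (R ` S)"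
proof -
  have fin: "finite S" using S(2) finite_subset by blast
  define m where "m = Min S"
  have mS: "m \<in> S" using fin S(1) m_def by simp
  have mle: "\<forall>x\<in>S. m \<le> x" using fin m_def by simp
  have Rm: "Min (R ` S) = R m"
  proof (rule Min_eqI)
    show "finite (R ` S)" using fin by simp
    show "\<And>y. y \<in> R ` S \<Longrightarrow> R m \<le> y" using mle mS S(2) srt by blast
    show "R m \<in> R ` S" using mS by simp
  qed
  have Rmp: "R m > 0" using mS S(2) Rp by blast
  have each: "(al i + c) / R i \<le> al i / R m" if iS: "i \<in> S - {m}" for i
  proof -
    have i1: "i \<in> {1..n}" "m \<in> {1..n}" using iS mS S(2) by auto
    have gt: "m < i" using mle iS by force
    have "i - 1 \<in> {1..<n}" using i1 gt by auto
    with hyp have h: "(al i + c) / R i \<le> al i / R (i - 1)" using gt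
      by (metis One_nat_def Suc_pred' add.commute gr0I not_less0 plus_1_eq_Suc)
    have "i - 1 \<in> {1..n}" "m \<le> i - 1" using i1 gt by auto
    hence "R m \<le> R (i - 1)" using srt i1 by blast
    hence "al i / R (i - 1) \<le> al i / R m"
      using alp i1 Rmp by (intro divide_left_mono) (auto simp: less_imp_le)
    with h show ?thesis by linarith
  qed
  have "(\<Sum>i\<in>S. (al i + c) / R i) = (al m + c) / R m + (\<Sum>i\<in>S - {m}. (al i + c) / R i)"
    using fin mS by (simp add: sum.remove)
  also have "\<dots> \<le> (al m + c) / R m + (\<Sum>i\<in>S - {m}. al i / R m)"
    using each by (intro add_left_mono sum_mono) auto
  also have "\<dots> = (al m + c + sum al (S - {m})) / R m"
    by (simp add: sum_divide_distrib[symmetric] add_divide_distrib)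
  also have "sum al S = al m + sum al (S - {m})"
    using fin mS by (simp add: sum.remove)
  hence "(al m + c + sum al (S - {m})) / R m = (sum al S + c) / Min (R ` S)"
    using Rm by simp
  finally show ?thesis .
qed

theorem theorem8:
  fixes n :: nat
    and U R P_Rx :: "nat \<Rightarrow> real"
    and X P_Tx a b w :: real
  assumes X_pos: "X > 0"
    and R_pos: "\<forall>i\<in>{1..n}. R i > 0"
    and PRx_pos: "\<forall>i\<in>{1..n}. P_Rx i > 0"
    and PTx_pos: "P_Tx > 0"
    and a_pos: "a > 0" and b_pos: "b > 0" and w_pos: "w > 0"
    and R_sorted: "\<forall>i\<in>{1..n}. \<forall>j\<in>{1..n}. i \<le> j \<longrightarrow> R i \<le> R j"
    and ratio: "\<forall>i\<in>{1..<n}.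
        R (i+1) / R i \<ge> (a * P_Rx (i+1) * X + b * P_Tx * X + w * X) / (a * P_Rx (i+1) * X)"
  shows "Dc_stable {1..n}
           (mc_value U R (\<lambda>i. a * P_Rx i * X) (b * P_Tx * X) (w * X))
           {{i} | i. i \<in> {1..n}}"
proof -
  define al where "al = (\<lambda>i. a * P_Rx i * X)"
  define c where "c = b * P_Tx * X + w * X"
  define v where "v = mc_value U R al (b * P_Tx * X) (w * X)"
  have alp: "\<forall>i\<in>{1..n}. al i > 0" using PRx_pos a_pos X_pos al_def by auto
  have hyp: "\<forall>i\<in>{1..<n}. (al (i+1) + c) / R (i+1) \<le> al (i+1) / R i"
  proof
    fix i assume i: "i \<in> {1..<n}"
    have A: "al (i+1) > 0" and R1: "R i > 0" and R2: "R (i+1) > 0"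
      using alp R_pos i by auto
    have "(al (i+1) + c) / al (i+1) \<le> R (i+1) / R i"
      using ratio i by (simp add: al_def c_def add.assoc)
    hence "(al (i+1) + c) * R i \<le> R (i+1) * al (i+1)"
      using A R1 by (simp add: divide_simps)
    thus "(al (i+1) + c) / R (i+1) \<le> al (i+1) / R i"
      using A R1 R2 by (simp add: divide_simps mult.commute)
  qed
  have single: "v {i} = U i - (al i + c) / R i" for i
    by (simp add: v_def mc_value_def rate_min_def c_def add_divide_distrib diff_divide_distrib)
  have setle: "v S \<le> (\<Sum>i\<in>S. v {i})" if "S \<noteq> {}" "S \<subseteq> {1..n}" for S
  proof -
    have fin: "finite S" using that(2) finite_subset by blast
    have k: "(\<Sum>i\<in>S. (al i + c) / R i) \<le> (sum al S + c) / Min (R ` S)"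
      using key_ineq[OF that R_pos alp R_sorted hyp] .
    have "v S = sum U S - (sum al S + c) / Min (R ` S)"
      by (simp add: v_def mc_value_def rate_min_def c_def sum_divide_distrib[symmetric]
          add_divide_distrib diff_divide_distrib)
    moreover have "(\<Sum>i\<in>S. v {i}) = sum U S - (\<Sum>i\<in>S. (al i + c) / R i)"
      by (simp add: single sum_subtractf)
    ultimately show ?thesis using k by linarith
  qed
  show ?thesis unfolding Dc_stable_def v_def[symmetric] al_def[symmetric]
  proof (intro allI impI)
    fix SS assume col: "is_collection {1..n} SS"
    have ne: "\<forall>S\<in>SS. S \<noteq> {} \<and> S \<subseteq> {1..n}"
      and dj: "\<forall>S\<in>SS. \<forall>T\<in>SS. S \<noteq> T \<longrightarrow> S \<inter> T = {}"
      using col unfolding is_collection_def by auto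
    have finSS: "finite SS" using ne by (meson Pow_iff finite_Pow_iff finite_atLeastAtMost finite_subset subsetI)
    have finS: "\<forall>S\<in>SS. finite S" using ne finite_subset by blast
    have U: "\<Union>SS \<subseteq> {1..n}" using ne by auto
    have cr: "coll_restrict SS {{i} | i. i \<in> {1..n}} = (\<lambda>i. {i}) ` (\<Union>SS)"
      unfolding coll_restrict_def
    proof (intro equalityI subsetI)
      fix x assume "x \<in> {\<Union>SS \<inter> P |P. P \<in> {{i} |i. i \<in> {1..n}} \<and> \<Union>SS \<inter> P \<noteq> {}}"
      thus "x \<in> (\<lambda>i. {i}) ` \<Union>SS" by auto
    next
      fix x assume "x \<in> (\<lambda>i. {i}) ` \<Union>SS"
      then obtain i where i: "i \<in> \<Union>SS" "x = {i}" by auto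
      hence "x = \<Union>SS \<inter> {i} \<and> {i} \<in> {{i} |i. i \<in> {1..n}} \<and> \<Union>SS \<inter> {i} \<noteq> {}"
        using U by auto
      thus "x \<in> {\<Union>SS \<inter> P |P. P \<in> {{i} |i. i \<in> {1..n}} \<and> \<Union>SS \<inter> P \<noteq> {}}" by blast
    qed
    have "coll_value v SS = (\<Sum>S\<in>SS. v S)" by (simp add: coll_value_def)
    also have "\<dots> \<le> (\<Sum>S\<in>SS. \<Sum>i\<in>S. v {i})" using ne setle by (intro sum_mono) auto
    also have "\<dots> = (\<Sum>i\<in>\<Union>SS. v {i})"
    proof -
      have "\<And>g. sum g (\<Union>SS) = sum (sum g) SS"
        using sum.Union_disjoint[OF finS dj] by simp
      from this[of "\<lambda>i. v {i}"] show ?thesis by simp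
    qed
    also have "\<dots> = coll_value v ((\<lambda>i. {i}) ` (\<Union>SS))"
      by (simp add: coll_value_def sum.reindex)
    finally show "coll_value v SS \<le> coll_value v (coll_restrict SS {{i} | i. i \<in> {1..n}})"
      using cr by simp
  qed
qed

end
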